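(* Let $m,n\ge 2$ and let $W$ be a channel from $\{1,\dots,m\}$ to $\{1,\dots,n\}$. Let $\alpha_j=\min_{1\le i\le m}W_{i,j}$ for $1\le j\le n$. Then $\overline{P}_W(1)=\sum_{j=1}^n\alpha_j$, and \[ \underline{C}_{11}(W)\ge 1-\overline{P}_W(1). \] If $\overline{P}_W(1)=1$, then $\underline{C}_{11}(W)\le 0$. If $\overline{P}_W(1)<1$, define \[ W'=\frac{W-\sum_{j=1}^n\alpha_j\mathrm{U}_j}{1-\overline{P}_W(1)},\qquad a=\lfloor \mathbf{1}W'\rfloor\ (\text{entrywise}),\qquad \gamma=\Big(m+\mathrm{w}(a)-\sum_{j=1}^n a_j\Big)\wedge n; \] then $\underline{C}_{11}(W)\le (1-\overline{P}_W(1))\log_2\gamma$. Moreover, if $m=2$ or $n=2$, then $\underline{C}_{11}(W)=1-\overline{P}_W(1)$.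
   Context: A channel from $\mathcal{X}=\{1,\dots,m\}$ to $\mathcal{Y}=\{1,\dots,n\}$ is an $m\times n$ row-stochastic matrix $W=(W_{x,y})$. A deterministic channel is a channel whose entries are all $0$ or $1$; it is identified with the map $D:\mathcal{X}\to\mathcal{Y}$ with $D(x)=y$ iff $D_{x,y}=1$. $\mathcal{D}$ is the set of all deterministic channels, and $\mathrm{rank}(D)$ is the matrix rank (the number of nonzero columns). $\mathrm{U}_j$ denotes the deterministic channel whose $j$-th column is all ones. $\Lambda(W)=\{\lambda \text{ probability distribution on }\mathcal{D}: W=\sum_{D\in\mathcal{D}}\lambda_D D\}$. For $\lambda$ a probability distribution on $\mathcal{D}$, $C_{11}(\lambda)=\sum_D\lambda_D\log_2\mathrm{rank}(D)$, and $\underline{C}_{11}(W)=\inf\{C_{11}(\lambda):\lambda\in\Lambda(W)\}$. For $\lambda\in\Lambda(W)$, $P_\lambda(r)=\lambda(\{D\in\mathcal{D}:\mathrm{rank}(D)=r\})$ and $\overline{P}_W(r)=\max_{\lambda\in\Lambda(W)}P_\lambda(r)$. $\mathbf{1}$ is the all-one row vector of length $m$ (so $\mathbf{1}W$ is the vector of column sums). For a vector $a$, $\mathrm{w}(a)$ is the number of its nonzero entries; $x\wedge y=\min(x,y)$. *)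

theory Defs
  imports Complex_Main "HOL-Library.FuncSet"
begin

text \<open>Indices are 0-based: inputs {..<m}, outputs {..<n}.
A channel is W :: nat => nat => real, W x y the entry in row x, column y.\<close>

definition channel :: "nat \<Rightarrow> nat \<Rightarrow> (nat \<Rightarrow> nat \<Rightarrow> real) \<Rightarrow> bool" where
  "channel m n W \<longleftrightarrow> (\<forall>x<m. \<forall>y<n. W x y \<ge> 0) \<and> (\<forall>x<m. (\<Sum>y<n. W x y) = 1)"

definition det_channels :: "nat \<Rightarrow> nat \<Rightarrow> (nat \<Rightarrow> nat) set" where
  "det_channels m n = ({..<m} \<rightarrow>\<^sub>E {..<n})"

definition det_matrix :: "(nat \<Rightarrow> nat) \<Rightarrow> nat \<Rightarrow> nat \<Rightarrow> real" where
  "det_matrix D x y = (if D x = y then 1 else 0)"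

text \<open>Rank = number of nonzero columns = size of the image.\<close>
definition drank :: "nat \<Rightarrow> (nat \<Rightarrow> nat) \<Rightarrow> nat" where
  "drank m D = card (D ` {..<m})"

definition U_chan :: "nat \<Rightarrow> nat \<Rightarrow> nat \<Rightarrow> nat" where
  "U_chan m j = (\<lambda>x. if x < m then j else undefined)"

definition Lambda :: "nat \<Rightarrow> nat \<Rightarrow> (nat \<Rightarrow> nat \<Rightarrow> real) \<Rightarrow> ((nat \<Rightarrow> nat) \<Rightarrow> real) set" where
  "Lambda m n W = {lam.
     (\<forall>D. D \<notin> det_channels m n \<longrightarrow> lam D = 0) \<and>
     (\<forall>D\<in>det_channels m n. lam D \<ge> 0) \<and>
     (\<Sum>D\<in>det_channels m n. lam D) = 1 \<and>
     (\<forall>x<m. \<forall>y<n. W x y = (\<Sum>D\<in>det_channels m n. lam D * det_matrix D x y))}"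

definition C11 :: "nat \<Rightarrow> nat \<Rightarrow> ((nat \<Rightarrow> nat) \<Rightarrow> real) \<Rightarrow> real" where
  "C11 m n lam = (\<Sum>D\<in>det_channels m n. lam D * log 2 (real (drank m D)))"

definition lower_C11 :: "nat \<Rightarrow> nat \<Rightarrow> (nat \<Rightarrow> nat \<Rightarrow> real) \<Rightarrow> real" where
  "lower_C11 m n W = Inf (C11 m n ` Lambda m n W)"

definition P_lam :: "nat \<Rightarrow> nat \<Rightarrow> ((nat \<Rightarrow> nat) \<Rightarrow> real) \<Rightarrow> nat \<Rightarrow> real" where
  "P_lam m n lam r = (\<Sum>D\<in>{D\<in>det_channels m n. drank m D = r}. lam D)"

text \<open>The paper's max; we use Sup (the theorem's value claim then fixes it).\<close>
definition upper_P :: "nat \<Rightarrow> nat \<Rightarrow> (nat \<Rightarrow> nat \<Rightarrow> real) \<Rightarrow> nat \<Rightarrow> real" where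
  "upper_P m n W r = Sup ((\<lambda>lam. P_lam m n lam r) ` Lambda m n W)"

end

theory Submission
  imports Defs
begin

lemma linalg_kernel:
  fixes a :: "'i \<Rightarrow> 'v \<Rightarrow> real"
  assumes "finite I" "finite V" "card I < card V"
  shows "\<exists>e. (\<exists>v\<in>V. e v \<noteq> 0) \<and> (\<forall>i\<in>I. (\<Sum>v\<in>V. a i v * e v) = 0)"
  using assms
proof (induction I arbitrary: V a rule: finite_induct)
  case empty
  then have "V \<noteq> {}" by auto
  then obtain v where "v \<in> V" by auto
  then show ?case by (rule_tac x="\<lambda>_. 1" in exI) auto
next
  case (insert i I)
  show ?case
  proof (cases "\<forall>v\<in>V. a i v = 0")
    case True
    have "card I < card V" using insert by simp
    from insert.IH[OF insert.prems(1) this, of a] obtain e where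
      e: "\<exists>v\<in>V. e v \<noteq> 0" "\<forall>k\<in>I. (\<Sum>v\<in>V. a k v * e v) = 0" by blast
    show ?thesis using e True by (rule_tac x=e in exI) auto
  next
    case False
    then obtain v0 where v0: "v0 \<in> V" "a i v0 \<noteq> 0" by auto
    define V' where "V' = V - {v0}"
    define a' where "a' = (\<lambda>k v. a k v - a k v0 * a i v / a i v0)"
    have fV': "finite V'" using insert V'_def by auto
    have cV': "card V' = card V - 1" using v0 insert V'_def by auto
    have "card I < card V'" using insert cV' by simp
    from insert.IH[OF fV' this, of a'] obtain e where
      e: "\<exists>v\<in>V'. e v \<noteq> 0" "\<forall>k\<in>I. (\<Sum>v\<in>V'. a' k v * e v) = 0" by blast
    define x0 where "x0 = - (\<Sum>w\<in>V'. a i w * e w) / a i v0"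
    define e2 where "e2 = (\<lambda>v. if v = v0 then x0 else e v)"
    have split: "(\<Sum>v\<in>V. f v * e2 v) = f v0 * x0 + (\<Sum>v\<in>V'. f v * e v)" for f
    proof -
      have "(\<Sum>v\<in>V. f v * e2 v) = f v0 * e2 v0 + (\<Sum>v\<in>V'. f v * e2 v)"
        using v0 insert(4) V'_def by (simp add: sum.remove)
      also have "(\<Sum>v\<in>V'. f v * e2 v) = (\<Sum>v\<in>V'. f v * e v)"
        by (rule sum.cong) (auto simp: e2_def V'_def)
      finally show ?thesis by (simp add: e2_def)
    qed
    have eqi: "(\<Sum>v\<in>V. a i v * e2 v) = 0"
      unfolding split x0_def using v0 by simp
    have eqk: "(\<Sum>v\<in>V. a k v * e2 v) = 0" if "k \<in> I" for k
    proof -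
      have "0 = (\<Sum>v\<in>V'. a' k v * e v)" using e(2) that by simp
      also have "\<dots> = (\<Sum>v\<in>V'. a k v * e v) - a k v0 / a i v0 * (\<Sum>v\<in>V'. a i v * e v)"
        unfolding a'_def by (simp add: sum_subtractf sum_distrib_left algebra_simps)
      also have "\<dots> = (\<Sum>v\<in>V'. a k v * e v) + a k v0 * x0"
        unfolding x0_def by (simp add: field_simps)
      finally show ?thesis unfolding split by simp
    qed
    have nz: "\<exists>v\<in>V. e2 v \<noteq> 0"
      using e(1) by (auto simp: V'_def e2_def)
    show ?thesis using nz eqi eqk by (rule_tac x=e2 in exI) auto
  qed
qed

definition polyP :: "nat \<Rightarrow> nat \<Rightarrow> (nat \<Rightarrow> int) \<Rightarrow> (nat \<Rightarrow> nat \<Rightarrow> real) \<Rightarrow> bool" where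
  "polyP m n l X \<longleftrightarrow> (\<forall>x<m. \<forall>y<n. X x y \<ge> 0) \<and> (\<forall>x<m. (\<Sum>y<n. X x y) = 1)
     \<and> (\<forall>j<n. real_of_int (l j) \<le> (\<Sum>x<m. X x j))"

definition frs :: "nat \<Rightarrow> nat \<Rightarrow> (nat \<Rightarrow> nat \<Rightarrow> real) \<Rightarrow> (nat \<times> nat) set" where
  "frs m n X = {(x,j). x<m \<and> j<n \<and> 0 < X x j \<and> X x j < 1}"

definition nis :: "nat \<Rightarrow> nat \<Rightarrow> (nat \<Rightarrow> nat \<Rightarrow> real) \<Rightarrow> nat set" where
  "nis m n X = {j. j<n \<and> (\<Sum>x<m. X x j) \<notin> \<int>}"

definition pot :: "nat \<Rightarrow> nat \<Rightarrow> (nat \<Rightarrow> nat \<Rightarrow> real) \<Rightarrow> nat" where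
  "pot m n X = card (frs m n X) + card (nis m n X)"

lemma frs_sub: "frs m n X \<subseteq> {..<m} \<times> {..<n}"
  by (auto simp: frs_def)

lemma finite_frs: "finite (frs m n X)"
  by (rule finite_subset[OF frs_sub]) auto

lemma finite_nis: "finite (nis m n X)"
  by (rule finite_subset[of _ "{..<n}"]) (auto simp: nis_def)

lemma step:
  assumes P: "polyP m n l X"
    and Ez: "\<forall>x j. (x,j) \<notin> frs m n X \<longrightarrow> E x j = 0"
    and Er: "\<forall>x<m. (\<Sum>j<n. E x j) = 0"
    and Ec: "\<forall>j<n. (\<Sum>x<m. X x j) \<in> \<int> \<longrightarrow> (\<Sum>x<m. E x j) = 0"
    and Enz: "E x0 j0 \<noteq> 0"
  shows "\<exists>t>0. polyP m n l (\<lambda>x y. X x y + t * E x y)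
              \<and> pot m n (\<lambda>x y. X x y + t * E x y) < pot m n X"
proof -
  define V where "V = frs m n X"
  define c where "c = (\<lambda>j. \<Sum>x<m. X x j)"
  define s where "s = (\<lambda>j. \<Sum>x<m. E x j)"
  have fV: "finite V" unfolding V_def by (rule finite_frs)
  have "(x0,j0) \<in> V" using Ez Enz unfolding V_def by blast
  hence x0: "x0 < m" "j0 < n" unfolding V_def frs_def by auto
  have "\<exists>j<n. E x0 j < 0"
  proof (rule ccontr)
    assume "\<not> ?thesis"
    hence "\<forall>j\<in>{..<n}. E x0 j \<ge> 0" by auto
    moreover have "(\<Sum>j<n. E x0 j) = 0" using Er x0 by auto
    ultimately have "\<forall>j\<in>{..<n}. E x0 j = 0" using sum_nonneg_eq_0_iff[of "{..<n}"] by auto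
    thus False using x0 Enz by auto
  qed
  then obtain j1 where j1: "j1 < n" "E x0 j1 < 0" by auto
  have v1: "(x0,j1) \<in> V" using Ez j1 unfolding V_def by fastforce
  define N1 where "N1 = {v\<in>V. E (fst v) (snd v) < 0}"
  define N2 where "N2 = {j\<in>nis m n X. s j < 0}"
  define G1 where "G1 = (\<lambda>v. X (fst v) (snd v) / - E (fst v) (snd v)) ` N1"
  define G2 where "G2 = (\<lambda>j. (c j - of_int \<lfloor>c j\<rfloor>) / - s j) ` N2"
  define t where "t = Min (G1 \<union> G2)"
  have fN1: "finite N1" using fV unfolding N1_def by auto
  have fN2: "finite N2" using finite_nis unfolding N2_def by auto
  have fG: "finite (G1 \<union> G2)" using fN1 fN2 unfolding G1_def G2_def by auto
  have neG: "G1 \<union> G2 \<noteq> {}" using v1 j1 unfolding G1_def N1_def by auto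
  have tin: "t \<in> G1 \<union> G2" unfolding t_def using fG neG by (rule Min_in)
  have tle: "t \<le> g" if "g \<in> G1 \<union> G2" for g unfolding t_def using fG that by simp
  have XV: "0 < X x j" "X x j < 1" "x < m" "j < n" if "(x,j) \<in> V" for x j
    using that unfolding V_def frs_def by auto
  have posG: "g > 0" if "g \<in> G1 \<union> G2" for g
  proof -
    { assume "g \<in> G1"
      then obtain v where "v \<in> N1" "g = X (fst v) (snd v) / - E (fst v) (snd v)"
        unfolding G1_def by auto
      moreover have "X (fst v) (snd v) > 0" using XV[of "fst v" "snd v"] \<open>v \<in> N1\<close>
        unfolding N1_def by auto
      ultimately have "g > 0" unfolding N1_def by (auto simp: divide_pos_neg) }
    moreover
    { assume "g \<in> G2"
      then obtain j where j: "j \<in> N2" "g = (c j - of_int \<lfloor>c j\<rfloor>) / - s j"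
        unfolding G2_def by auto
      have "c j \<notin> \<int>" using j unfolding N2_def nis_def c_def by auto
      hence "c j \<noteq> of_int \<lfloor>c j\<rfloor>" by (metis Ints_of_int)
      hence "c j - of_int \<lfloor>c j\<rfloor> > 0" using of_int_floor_le[of "c j"] by linarith
      hence "g > 0" using j unfolding N2_def by (auto simp: divide_pos_neg) }
    ultimately show ?thesis using that by auto
  qed
  have tpos: "t > 0" using posG tin by auto
  define X1 where "X1 = (\<lambda>x y. X x y + t * E x y)"
  have PP: "(\<forall>x<m. \<forall>y<n. X x y \<ge> 0)" "(\<forall>x<m. (\<Sum>y<n. X x y) = 1)"
     "(\<forall>j<n. real_of_int (l j) \<le> c j)" using P unfolding polyP_def c_def by auto
  have c1: "(\<Sum>x<m. X1 x j) = c j + t * s j" for j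
    unfolding X1_def c_def s_def by (simp add: sum.distrib sum_distrib_left)
  have nonneg: "X1 x y \<ge> 0" if "x < m" "y < n" for x y
  proof (cases "E x y < 0")
    case True
    hence "(x,y) \<in> V" using Ez unfolding V_def by fastforce
    hence "(x,y) \<in> N1" using True unfolding N1_def by auto
    hence "t \<le> X x y / - E x y" using tle unfolding G1_def by fastforce
    moreover have "- E x y > 0" using True by simp
    ultimately have "t * (- E x y) \<le> X x y" using pos_le_divide_eq by blast
    thus ?thesis unfolding X1_def by simp
  next
    case False
    thus ?thesis using PP(1) that tpos unfolding X1_def by simp
  qed
  have rows: "(\<Sum>y<n. X1 x y) = 1" if "x < m" for x
    using PP(2) Er that unfolding X1_def by (simp add: sum.distrib sum_distrib_left[symmetric])
  have cols: "real_of_int (l j) \<le> (\<Sum>x<m. X1 x j)" if "j < n" for j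
  proof (cases "c j \<in> \<int>")
    case True
    hence "s j = 0" using Ec that unfolding s_def c_def by auto
    thus ?thesis using c1 PP(3) that by simp
  next
    case False
    have lf: "real_of_int (l j) \<le> of_int \<lfloor>c j\<rfloor>"
      using PP(3) that by (simp add: le_floor_iff)
    show ?thesis
    proof (cases "s j < 0")
      case True
      hence "j \<in> N2" using False that unfolding N2_def nis_def c_def by auto
      hence "t \<le> (c j - of_int \<lfloor>c j\<rfloor>) / - s j" using tle unfolding G2_def by fastforce
      moreover have "- s j > 0" using True by simp
      ultimately have "t * (- s j) \<le> c j - of_int \<lfloor>c j\<rfloor>" using pos_le_divide_eq by blast
      thus ?thesis using c1 lf by simp
    next
      case False
      hence "t * s j \<ge> 0" using tpos by simp
      moreover have "real_of_int (l j) \<le> c j" using PP(3) that by auto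
      ultimately show ?thesis using c1 by simp
    qed
  qed
  have Pnew: "polyP m n l X1" unfolding polyP_def using nonneg rows cols by auto
  have frsub: "frs m n X1 \<subseteq> V"
  proof
    fix v assume v: "v \<in> frs m n X1"
    obtain x j where vv: "v = (x,j)" by (cases v)
    show "v \<in> V"
    proof (rule ccontr)
      assume "v \<notin> V"
      hence "E x j = 0" using Ez vv unfolding V_def by auto
      hence "X1 x j = X x j" unfolding X1_def by simp
      thus False using v vv \<open>v \<notin> V\<close> unfolding V_def frs_def by auto
    qed
  qed
  have nisub: "nis m n X1 \<subseteq> nis m n X"
  proof
    fix j assume j: "j \<in> nis m n X1"
    show "j \<in> nis m n X"
    proof (rule ccontr)
      assume "j \<notin> nis m n X"
      hence "c j \<in> \<int>" "j < n" using j unfolding nis_def c_def by auto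
      hence "s j = 0" using Ec unfolding s_def c_def by auto
      thus False using j c1 \<open>c j \<in> \<int>\<close> unfolding nis_def by auto
    qed
  qed
  have "pot m n X1 < pot m n X"
  proof (cases "t \<in> G1")
    case True
    then obtain v where v: "v \<in> N1" "t = X (fst v) (snd v) / - E (fst v) (snd v)"
      unfolding G1_def by auto
    have "X1 (fst v) (snd v) = 0" using v unfolding X1_def N1_def by auto
    hence "v \<notin> frs m n X1" unfolding frs_def by auto
    moreover have "v \<in> V" using v unfolding N1_def by auto
    ultimately have "frs m n X1 \<subset> V" using frsub by auto
    hence "card (frs m n X1) < card V" using fV psubset_card_mono by auto
    moreover have "card (nis m n X1) \<le> card (nis m n X)"
      by (rule card_mono[OF finite_nis nisub])
    ultimately show ?thesis unfolding pot_def V_def by simp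
  next
    case False
    hence "t \<in> G2" using tin by auto
    then obtain j where j: "j \<in> N2" "t = (c j - of_int \<lfloor>c j\<rfloor>) / - s j"
      unfolding G2_def by auto
    have "(\<Sum>x<m. X1 x j) = of_int \<lfloor>c j\<rfloor>" using j c1 unfolding N2_def by auto
    hence "j \<notin> nis m n X1" unfolding nis_def by auto
    moreover have "j \<in> nis m n X" using j unfolding N2_def by auto
    ultimately have "nis m n X1 \<subset> nis m n X" using nisub by auto
    hence "card (nis m n X1) < card (nis m n X)" by (rule psubset_card_mono[OF finite_nis])
    moreover have "card (frs m n X1) \<le> card V"
      by (rule card_mono[OF fV frsub])
    ultimately show ?thesis unfolding pot_def V_def by simp
  qed
  thus ?thesis using Pnew tpos unfolding X1_def by blast
qed

lemma fiber2:
  fixes f :: "'a \<Rightarrow> real"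
  assumes "finite A" "(\<Sum>a\<in>A. f a) \<in> \<int>" "\<forall>a\<in>A. 0 \<le> f a \<and> f a \<le> 1"
    "a0 \<in> A" "0 < f a0" "f a0 < 1"
  shows "\<exists>a1\<in>A. a1 \<noteq> a0 \<and> 0 < f a1 \<and> f a1 < 1"
proof (rule ccontr)
  assume "\<not> ?thesis"
  hence "\<forall>a\<in>A - {a0}. f a \<in> \<int>"
  proof (intro ballI)
    fix a assume a: "a \<in> A - {a0}" "\<not> (\<exists>a1\<in>A. a1 \<noteq> a0 \<and> 0 < f a1 \<and> f a1 < 1)"
    hence "f a = 0 \<or> f a = 1" using assms(3) by force
    thus "f a \<in> \<int>" by auto
  qed
  hence "(\<Sum>a\<in>A - {a0}. f a) \<in> \<int>" by (intro Ints_sum) auto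
  moreover have "(\<Sum>a\<in>A. f a) = f a0 + (\<Sum>a\<in>A - {a0}. f a)"
    using assms(1,4) by (simp add: sum.remove)
  ultimately have "f a0 = (\<Sum>a\<in>A. f a) - (\<Sum>a\<in>A - {a0}. f a)" "(\<Sum>a\<in>A - {a0}. f a) \<in> \<int>" by auto
  hence "f a0 \<in> \<int>" using assms(2) Ints_diff by metis
  then obtain k where "f a0 = of_int k" by (auto elim: Ints_cases)
  thus False using assms(5,6) by auto
qed

lemma sum_conv:
  fixes g :: "nat \<times> nat \<Rightarrow> real"
  assumes "V \<subseteq> {..<m} \<times> {..<n}"
  shows "(\<Sum>v\<in>V. g v * e v) = (\<Sum>x<m. \<Sum>j<n. g (x,j) * (if (x,j) \<in> V then e (x,j) else 0))"
proof -
  have "(\<Sum>v\<in>V. g v * e v) = (\<Sum>v\<in>V. g v * (if v \<in> V then e v else 0))"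
    by (rule sum.cong) auto
  also have "\<dots> = (\<Sum>v\<in>{..<m} \<times> {..<n}. g v * (if v \<in> V then e v else 0))"
    by (rule sum.mono_neutral_left) (use assms in auto)
  also have "\<dots> = (\<Sum>x<m. \<Sum>j<n. g (x,j) * (if (x,j) \<in> V then e (x,j) else 0))"
    by (simp add: sum.cartesian_product)
  finally show ?thesis .
qed

lemma delta_row:
  fixes F :: "nat \<Rightarrow> nat \<Rightarrow> real"
  assumes "x < m"
  shows "(\<Sum>xa<m. \<Sum>j<n. if xa = x then F xa j else 0) = (\<Sum>j<n. F x j)"
proof -
  have "(\<Sum>xa<m. \<Sum>j<n. if xa = x then F xa j else 0) = (\<Sum>xa<m. if xa = x then (\<Sum>j<n. F xa j) else 0)"
    by (rule sum.cong) auto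
  also have "\<dots> = (\<Sum>j<n. F x j)" using assms by (simp add: sum.delta)
  finally show ?thesis .
qed

lemma delta_col:
  fixes F :: "nat \<Rightarrow> nat \<Rightarrow> real"
  assumes "j0 < n"
  shows "(\<Sum>xa<m. \<Sum>j<n. if j = j0 then F xa j else 0) = (\<Sum>x<m. F x j0)"
  using assms by (simp add: sum.delta)

lemma exE:
  assumes P: "polyP m n l X" and ne: "frs m n X \<noteq> {}"
  shows "\<exists>E::nat\<Rightarrow>nat\<Rightarrow>real. (\<forall>x j. (x,j) \<notin> frs m n X \<longrightarrow> E x j = 0) \<and> (\<forall>x<m. (\<Sum>j<n. E x j) = 0)
     \<and> (\<forall>j<n. (\<Sum>x<m. X x j) \<in> \<int> \<longrightarrow> (\<Sum>x<m. E x j) = 0) \<and> (\<exists>x j. E x j \<noteq> 0)"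
proof -
  define V where "V = frs m n X"
  define c where "c = (\<lambda>j. \<Sum>x<m. X x j)"
  define R where "R = fst ` V"
  define C where "C = snd ` V"
  define Ki where "Ki = {j\<in>C. c j \<in> \<int>}"
  have Vsub: "V \<subseteq> {..<m} \<times> {..<n}" unfolding V_def by (rule frs_sub)
  have fV: "finite V" unfolding V_def by (rule finite_frs)
  have fR: "finite R" "finite C" "finite Ki" using fV unfolding R_def C_def Ki_def by auto
  have PP: "(\<forall>x<m. \<forall>y<n. X x y \<ge> 0)" "(\<forall>x<m. (\<Sum>y<n. X x y) = 1)"
    using P unfolding polyP_def by auto
  have le1: "X x y \<le> 1" if "x < m" "y < n" for x y
  proof -
    have "X x y \<le> (\<Sum>y<n. X x y)" using PP(1) that by (intro member_le_sum) auto
    thus ?thesis using PP(2) that by simp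
  qed
  have inV: "(x,j) \<in> V \<longleftrightarrow> x < m \<and> j < n \<and> 0 < X x j \<and> X x j < 1" for x j
    unfolding V_def frs_def by auto
  have rowfib: "card {j. (x,j) \<in> V} \<ge> 2" if xR: "x \<in> R" for x
  proof -
    obtain j0 where j0: "(x,j0) \<in> V" using xR unfolding R_def by force
    have "\<exists>j1\<in>{..<n}. j1 \<noteq> j0 \<and> 0 < X x j1 \<and> X x j1 < 1"
      apply (rule fiber2[of "{..<n}" "X x"])
      using j0 PP le1 inV by auto
    then obtain j1 where j1: "(x,j1) \<in> V" "j1 \<noteq> j0" using j0 inV by auto
    have "{j0,j1} \<subseteq> {j. (x,j) \<in> V}" using j0 j1 by auto
    moreover have "finite {j. (x,j) \<in> V}" by (rule finite_subset[of _ "{..<n}"]) (use inV in auto)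
    ultimately have "card {j0,j1} \<le> card {j. (x,j) \<in> V}" by (rule card_mono[rotated])
    thus ?thesis using j1 by simp
  qed
  have colfib: "card {x. (x,j) \<in> V} \<ge> 2" if jK: "j \<in> Ki" for j
  proof -
    obtain x0 where x0: "(x0,j) \<in> V" using jK unfolding Ki_def C_def by force
    have "\<exists>x1\<in>{..<m}. x1 \<noteq> x0 \<and> 0 < X x1 j \<and> X x1 j < 1"
      apply (rule fiber2[of "{..<m}" "\<lambda>x. X x j"])
      using x0 PP le1 inV jK unfolding Ki_def c_def by auto
    then obtain x1 where x1: "(x1,j) \<in> V" "x1 \<noteq> x0" using x0 inV by auto
    have "{x0,x1} \<subseteq> {x. (x,j) \<in> V}" using x0 x1 by auto
    moreover have "finite {x. (x,j) \<in> V}" by (rule finite_subset[of _ "{..<m}"]) (use inV in auto)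
    ultimately have "card {x0,x1} \<le> card {x. (x,j) \<in> V}" by (rule card_mono[rotated])
    thus ?thesis using x1 by simp
  qed
  have cardR: "card V \<ge> 2 * card R"
  proof -
    have "V = Sigma R (\<lambda>x. {j. (x,j) \<in> V})" unfolding R_def by force
    moreover have "finite {j. (x,j) \<in> V}" for x
      by (rule finite_subset[of _ "{..<n}"]) (use inV in auto)
    ultimately have "card V = (\<Sum>x\<in>R. card {j. (x,j) \<in> V})"
      using fR by (metis card_SigmaI)
    also have "\<dots> \<ge> (\<Sum>x\<in>R. 2)" by (rule sum_mono) (rule rowfib)
    finally show ?thesis by simp
  qed
  have cardC: "card V \<ge> (\<Sum>j\<in>J. card {x. (x,j) \<in> V})" if "finite J" for J
  proof -
    have fin: "finite {x. (x,j) \<in> V}" for j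
      by (rule finite_subset[of _ "{..<m}"]) (use inV in auto)
    have "(\<Sum>j\<in>J. card {x. (x,j) \<in> V}) = card (Sigma J (\<lambda>j. {x. (x,j) \<in> V}))"
      using that fin by (simp add: card_SigmaI)
    also have "\<dots> = card ((\<lambda>(j,x). (x,j)) ` Sigma J (\<lambda>j. {x. (x,j) \<in> V}))"
      by (rule card_image[symmetric]) (auto simp: inj_on_def)
    also have "\<dots> \<le> card V" by (rule card_mono[OF fV]) auto
    finally show ?thesis .
  qed
  define a :: "nat + nat \<Rightarrow> nat \<times> nat \<Rightarrow> real" where
    "a = (\<lambda>i v. case i of Inl x \<Rightarrow> (if fst v = x then 1 else 0) | Inr j \<Rightarrow> (if snd v = j then 1 else 0))"
  have key: "\<exists>e. (\<exists>v\<in>V. e v \<noteq> 0) \<and> (\<forall>x\<in>R. (\<Sum>v\<in>V. a (Inl x) v * e v) = 0)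
      \<and> (\<forall>j\<in>K. (\<Sum>v\<in>V. a (Inr j) v * e v) = 0)"
    if "K \<subseteq> C" "card R + card K < card V" for K
  proof -
    have fK: "finite K" using that fR finite_subset by blast
    have "card (Inl ` R \<union> Inr ` K) = card R + card K"
      using fK fR by (subst card_Un_disjoint) (auto simp: card_image)
    hence "card (Inl ` R \<union> Inr ` K) < card V" using that by simp
    from linalg_kernel[OF _ fV this, of a] fK fR
    obtain e where "\<exists>v\<in>V. e v \<noteq> 0" "\<forall>i\<in>Inl ` R \<union> Inr ` K. (\<Sum>v\<in>V. a i v * e v) = 0"
      by auto
    thus ?thesis by auto
  qed
  define E where "E e = (\<lambda>x j. if (x,j) \<in> V then e (x,j) else 0)" for e :: "nat \<times> nat \<Rightarrow> real"
  have rowconv: "(\<Sum>v\<in>V. a (Inl x) v * e v) = (\<Sum>j<n. E e x j)"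
    if "x < m" for x e
  proof -
    have "(\<Sum>v\<in>V. a (Inl x) v * e v) = (\<Sum>xa<m. \<Sum>j<n. if xa = x then E e xa j else 0)"
      unfolding sum_conv[OF Vsub] a_def E_def by (intro sum.cong) auto
    thus ?thesis using delta_row[OF that] by simp
  qed
  have colconv: "(\<Sum>v\<in>V. a (Inr j) v * e v) = (\<Sum>x<m. E e x j)"
    if "j < n" for j e
  proof -
    have "(\<Sum>v\<in>V. a (Inr j) v * e v) = (\<Sum>xa<m. \<Sum>j'<n. if j' = j then E e xa j' else 0)"
      unfolding sum_conv[OF Vsub] a_def E_def by (intro sum.cong) auto
    thus ?thesis using delta_col[OF that] by simp
  qed
  have Ez: "(x,j) \<notin> V \<Longrightarrow> E e x j = 0" for e x j unfolding E_def by auto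
  have Enz: "\<exists>x j. E e x j \<noteq> 0" if "\<exists>v\<in>V. e v \<noteq> 0" for e
    using that unfolding E_def by force
  have Erow: "(\<Sum>j<n. E e x j) = 0" if "\<forall>x\<in>R. (\<Sum>v\<in>V. a (Inl x) v * e v) = 0" "x < m" for e x
  proof (cases "x \<in> R")
    case True thus ?thesis using that rowconv by metis
  next
    case False
    hence "(x,j) \<notin> V" for j unfolding R_def by force
    thus ?thesis using Ez by simp
  qed
  have Ecol0: "(\<Sum>x<m. E e x j) = 0" if "j \<notin> C" for e j
  proof -
    have "(x,j) \<notin> V" for x using that unfolding C_def by force
    thus ?thesis using Ez by simp
  qed
  show ?thesis
  proof (cases "\<exists>j\<in>C. c j \<notin> \<int>")
    case True
    then obtain j1 where j1: "j1 \<in> C" "c j1 \<notin> \<int>" by auto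
    have "j1 \<notin> Ki" using j1 unfolding Ki_def by auto
    have h1: "card V \<ge> (\<Sum>j\<in>insert j1 Ki. card {x. (x,j) \<in> V})" by (rule cardC) (use fR in auto)
    have h2: "(\<Sum>j\<in>insert j1 Ki. card {x. (x,j) \<in> V}) = card {x. (x,j1) \<in> V} + (\<Sum>j\<in>Ki. card {x. (x,j) \<in> V})"
      using fR \<open>j1 \<notin> Ki\<close> by simp
    have h3: "(\<Sum>j\<in>Ki. card {x. (x,j) \<in> V}) \<ge> (\<Sum>j\<in>Ki. 2)" by (rule sum_mono) (rule colfib)
    have c1: "card V \<ge> card {x. (x,j1) \<in> V} + 2 * card Ki" using h1 h2 h3 by simp
    have "card {x. (x,j1) \<in> V} \<ge> 1"
    proof -
      obtain x1 where "(x1,j1) \<in> V" using j1 unfolding C_def by force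
      moreover have "finite {x. (x,j1) \<in> V}" by (rule finite_subset[of _ "{..<m}"]) (use inV in auto)
      ultimately show ?thesis by (metis One_nat_def Suc_leI card_gt_0_iff empty_iff mem_Collect_eq)
    qed
    hence "card R + card Ki < card V" using c1 cardR by linarith
    from key[OF _ this] obtain e where e: "\<exists>v\<in>V. e v \<noteq> 0" "\<forall>x\<in>R. (\<Sum>v\<in>V. a (Inl x) v * e v) = 0"
      "\<forall>j\<in>Ki. (\<Sum>v\<in>V. a (Inr j) v * e v) = 0" unfolding Ki_def by blast
    have "(\<Sum>x<m. E e x j) = 0" if "j < n" "c j \<in> \<int>" for j
    proof (cases "j \<in> C")
      case True
      hence "j \<in> Ki" using that unfolding Ki_def by auto
      thus ?thesis using e(3) colconv that by metis
    next
      case False thus ?thesis by (rule Ecol0)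
    qed
    hence "\<forall>j<n. (\<Sum>x<m. X x j) \<in> \<int> \<longrightarrow> (\<Sum>x<m. E e x j) = 0" unfolding c_def by blast
    moreover have "\<forall>x j. (x,j) \<notin> frs m n X \<longrightarrow> E e x j = 0" using Ez unfolding V_def by blast
    moreover have "\<forall>x<m. (\<Sum>j<n. E e x j) = 0" using Erow[OF e(2)] by blast
    ultimately show ?thesis using Enz[OF e(1)] by (intro exI[of _ "E e"] conjI) assumption+
  next
    case False
    hence KiC: "Ki = C" unfolding Ki_def by auto
    have "C \<noteq> {}" using ne unfolding C_def V_def by auto
    then obtain js where js: "js \<in> C" by auto
    have h1: "card V \<ge> (\<Sum>j\<in>Ki. card {x. (x,j) \<in> V})" by (rule cardC) (use fR in auto)
    have h3: "(\<Sum>j\<in>Ki. card {x. (x,j) \<in> V}) \<ge> (\<Sum>j\<in>Ki. 2)" by (rule sum_mono) (rule colfib)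
    have "card V \<ge> 2 * card C" using KiC h1 h3 by simp
    moreover have "card (C - {js}) = card C - 1" using js fR by simp
    moreover have "card C \<ge> 1" using js fR by (metis One_nat_def Suc_leI card_gt_0_iff empty_iff)
    ultimately have "card R + card (C - {js}) < card V" using cardR by linarith
    from key[OF _ this] obtain e where e: "\<exists>v\<in>V. e v \<noteq> 0" "\<forall>x\<in>R. (\<Sum>v\<in>V. a (Inl x) v * e v) = 0"
      "\<forall>j\<in>C - {js}. (\<Sum>v\<in>V. a (Inr j) v * e v) = 0" by blast
    have c0: "(\<Sum>x<m. E e x j) = 0" if "j < n" "j \<noteq> js" for j
    proof (cases "j \<in> C")
      case True
      thus ?thesis using e(3) colconv that by (metis DiffI singletonD)
    next
      case False thus ?thesis by (rule Ecol0)
    qed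
    have jsn: "js < n" using js Vsub unfolding C_def by auto
    have "(\<Sum>j<n. \<Sum>x<m. E e x j) = (\<Sum>x<m. \<Sum>j<n. E e x j)" by (rule sum.swap)
    also have "\<dots> = 0" using Erow[OF e(2)] by simp
    finally have tot: "(\<Sum>j<n. \<Sum>x<m. E e x j) = 0" .
    have "(\<Sum>j<n. \<Sum>x<m. E e x j) = (\<Sum>x<m. E e x js) + (\<Sum>j\<in>{..<n} - {js}. \<Sum>x<m. E e x j)"
      using jsn by (simp add: sum.remove)
    also have "(\<Sum>j\<in>{..<n} - {js}. \<Sum>x<m. E e x j) = 0" using c0 by (intro sum.neutral) auto
    finally have "(\<Sum>x<m. E e x js) = 0" using tot by simp
    hence "(\<Sum>x<m. E e x j) = 0" if "j < n" for j using c0 that by (cases "j = js") auto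
    hence "\<forall>j<n. (\<Sum>x<m. X x j) \<in> \<int> \<longrightarrow> (\<Sum>x<m. E e x j) = 0" by blast
    moreover have "\<forall>x j. (x,j) \<notin> frs m n X \<longrightarrow> E e x j = 0" using Ez unfolding V_def by blast
    moreover have "\<forall>x<m. (\<Sum>j<n. E e x j) = 0" using Erow[OF e(2)] by blast
    ultimately show ?thesis using Enz[OF e(1)] by (intro exI[of _ "E e"] conjI) assumption+
  qed
qed

definition isdec :: "nat \<Rightarrow> nat \<Rightarrow> (nat \<Rightarrow> nat \<Rightarrow> real) \<Rightarrow> ((nat \<Rightarrow> nat) \<Rightarrow> real) \<Rightarrow> bool" where
  "isdec m n X lam \<longleftrightarrow> (\<forall>D. D \<notin> det_channels m n \<longrightarrow> lam D = 0) \<and>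
     (\<forall>D\<in>det_channels m n. lam D \<ge> 0) \<and>
     (\<Sum>D\<in>det_channels m n. lam D) = 1 \<and>
     (\<forall>x<m. \<forall>y<n. X x y = (\<Sum>D\<in>det_channels m n. lam D * det_matrix D x y))"

definition cnt_ok :: "nat \<Rightarrow> nat \<Rightarrow> (nat \<Rightarrow> int) \<Rightarrow> ((nat \<Rightarrow> nat) \<Rightarrow> real) \<Rightarrow> bool" where
  "cnt_ok m n l lam \<longleftrightarrow> (\<forall>D\<in>det_channels m n. lam D > 0 \<longrightarrow>
      (\<forall>j<n. real_of_int (l j) \<le> real (card {x\<in>{..<m}. D x = j})))"

lemma finite_det: "finite (det_channels m n)"
  unfolding det_channels_def by (intro finite_PiE) auto

lemma mix:
  assumes d1: "isdec m n X1 lam1" "cnt_ok m n l lam1"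
    and d2: "isdec m n X2 lam2" "cnt_ok m n l lam2"
    and th: "0 \<le> th" "th \<le> 1"
    and X: "\<forall>x<m. \<forall>y<n. X x y = th * X1 x y + (1 - th) * X2 x y"
  shows "isdec m n X (\<lambda>D. th * lam1 D + (1 - th) * lam2 D) \<and> cnt_ok m n l (\<lambda>D. th * lam1 D + (1 - th) * lam2 D)"
proof -
  have s: "(\<Sum>D\<in>det_channels m n. th * lam1 D + (1 - th) * lam2 D) = th * (\<Sum>D\<in>det_channels m n. lam1 D) + (1 - th) * (\<Sum>D\<in>det_channels m n. lam2 D)"
    by (simp add: sum.distrib sum_distrib_left)
  have e: "(\<Sum>D\<in>det_channels m n. (th * lam1 D + (1 - th) * lam2 D) * det_matrix D x y) =
     th * (\<Sum>D\<in>det_channels m n. lam1 D * det_matrix D x y) + (1 - th) * (\<Sum>D\<in>det_channels m n. lam2 D * det_matrix D x y)" for x y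
  proof -
    have "(\<Sum>D\<in>det_channels m n. (th * lam1 D + (1 - th) * lam2 D) * det_matrix D x y) =
      (\<Sum>D\<in>det_channels m n. th * (lam1 D * det_matrix D x y) + (1 - th) * (lam2 D * det_matrix D x y))"
      by (rule sum.cong) (auto simp: algebra_simps)
    also have "\<dots> = th * (\<Sum>D\<in>det_channels m n. lam1 D * det_matrix D x y) + (1 - th) * (\<Sum>D\<in>det_channels m n. lam2 D * det_matrix D x y)"
      by (simp only: sum.distrib sum_distrib_left)
    finally show ?thesis .
  qed
  have "isdec m n X (\<lambda>D. th * lam1 D + (1 - th) * lam2 D)"
    using d1(1) d2(1) th X unfolding isdec_def s e by auto
  moreover have "cnt_ok m n l (\<lambda>D. th * lam1 D + (1 - th) * lam2 D)"
    unfolding cnt_ok_def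
  proof (intro ballI impI)
    fix D assume D: "D \<in> det_channels m n" "th * lam1 D + (1 - th) * lam2 D > 0"
    have "lam1 D \<ge> 0" "lam2 D \<ge> 0" using d1(1) d2(1) D(1) unfolding isdec_def by auto
    hence "lam1 D > 0 \<or> lam2 D > 0" using D(2) th
      by (metis add.right_neutral add_0 less_eq_real_def mult_zero_right)
    thus "\<forall>j<n. real_of_int (l j) \<le> real (card {x \<in> {..<m}. D x = j})"
      using d1(2) d2(2) D(1) unfolding cnt_ok_def by auto
  qed
  ultimately show ?thesis by blast
qed

lemma base:
  assumes P: "polyP m n l X" and fr: "frs m n X = {}"
  shows "\<exists>lam. isdec m n X lam \<and> cnt_ok m n l lam"
proof -
  have PP: "(\<forall>x<m. \<forall>y<n. X x y \<ge> 0)" "(\<forall>x<m. (\<Sum>y<n. X x y) = 1)"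
     "(\<forall>j<n. real_of_int (l j) \<le> (\<Sum>x<m. X x j))" using P unfolding polyP_def by auto
  have le1: "X x y \<le> 1" if "x < m" "y < n" for x y
  proof -
    have "X x y \<le> (\<Sum>y<n. X x y)" using PP(1) that by (intro member_le_sum) auto
    thus ?thesis using PP(2) that by simp
  qed
  have zo: "X x y = 0 \<or> X x y = 1" if "x < m" "y < n" for x y
  proof -
    have "(x,y) \<notin> frs m n X" using fr by auto
    thus ?thesis using that PP(1) le1[OF that] unfolding frs_def by force
  qed
  have ex1: "\<exists>y<n. X x y = 1" if "x < m" for x
  proof (rule ccontr)
    assume "\<not> ?thesis"
    hence "\<forall>y\<in>{..<n}. X x y = 0" using zo that by auto
    hence "(\<Sum>y<n. X x y) = 0" by simp
    thus False using PP(2) that by simp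
  qed
  have uniq: "y = y'" if "x < m" "y < n" "y' < n" "X x y = 1" "X x y' = 1" for x y y'
  proof (rule ccontr)
    assume ne: "y \<noteq> y'"
    have "(\<Sum>z\<in>{y,y'}. X x z) \<le> (\<Sum>z<n. X x z)"
      using that PP(1) by (intro sum_mono2) auto
    thus False using ne that PP(2) by simp
  qed
  define D where "D = (\<lambda>x. if x < m then (SOME y. y < n \<and> X x y = 1) else undefined)"
  have Dx: "D x < n \<and> X x (D x) = 1" if "x < m" for x
    unfolding D_def using that someI_ex[OF ex1[OF that]] by auto
  have Ddet: "D \<in> det_channels m n"
    unfolding det_channels_def PiE_def extensional_def using Dx by (auto simp: D_def)
  have Xeq: "X x y = det_matrix D x y" if "x < m" "y < n" for x y
  proof (cases "D x = y")
    case True thus ?thesis using Dx[OF that(1)] by (simp add: det_matrix_def)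
  next
    case False
    hence "X x y \<noteq> 1" using uniq[of x y "D x"] Dx[OF that(1)] that by auto
    thus ?thesis using zo[OF that] False by (simp add: det_matrix_def)
  qed
  define lam where "lam = (\<lambda>E. if E = D then (1::real) else 0)"
  have "isdec m n X lam"
    unfolding isdec_def lam_def using Ddet Xeq finite_det
    by (auto simp: if_distrib[of "\<lambda>z. z * _"] sum.delta' cong: if_cong)
  moreover have "cnt_ok m n l lam"
    unfolding cnt_ok_def
  proof (intro ballI impI allI)
    fix E j assume E: "E \<in> det_channels m n" "lam E > 0" and j: "j < n"
    hence ED: "E = D" unfolding lam_def by (auto split: if_splits)
    have "(\<Sum>x<m. X x j) = (\<Sum>x<m. of_bool (D x = j))"
      using Xeq j by (intro sum.cong) (auto simp: det_matrix_def)
    also have "\<dots> = real (card ({..<m} \<inter> {x. D x = j}))" by simp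
    also have "{..<m} \<inter> {x. D x = j} = {x\<in>{..<m}. D x = j}" by auto
    finally show "real_of_int (l j) \<le> real (card {x\<in>{..<m}. E x = j})"
      using PP(3) j ED by auto
  qed
  ultimately show ?thesis by blast
qed

lemma decomp:
  assumes "polyP m n l X"
  shows "\<exists>lam. isdec m n X lam \<and> cnt_ok m n l lam"
  using assms
proof (induction "pot m n X" arbitrary: X rule: less_induct)
  case less
  show ?case
  proof (cases "frs m n X = {}")
    case True thus ?thesis using base less.prems by blast
  next
    case False
    from exE[OF less.prems False] obtain E :: "nat \<Rightarrow> nat \<Rightarrow> real" where
      E: "\<forall>x j. (x,j) \<notin> frs m n X \<longrightarrow> E x j = 0" "\<forall>x<m. (\<Sum>j<n. E x j) = 0"
         "\<forall>j<n. (\<Sum>x<m. X x j) \<in> \<int> \<longrightarrow> (\<Sum>x<m. E x j) = 0" "\<exists>x j. E x j \<noteq> 0"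
      by blast
    obtain x0 j0 where nz: "E x0 j0 \<noteq> 0" using E(4) by blast
    from step[OF less.prems E(1-3) nz] obtain t1 where t1: "t1 > 0"
      "polyP m n l (\<lambda>x y. X x y + t1 * E x y)" "pot m n (\<lambda>x y. X x y + t1 * E x y) < pot m n X"
      by blast
    have E': "\<forall>x j. (x,j) \<notin> frs m n X \<longrightarrow> - E x j = 0" "\<forall>x<m. (\<Sum>j<n. - E x j) = 0"
         "\<forall>j<n. (\<Sum>x<m. X x j) \<in> \<int> \<longrightarrow> (\<Sum>x<m. - E x j) = 0" "- E x0 j0 \<noteq> 0"
      using E nz by (auto simp: sum_negf)
    from step[OF less.prems E'] obtain t2 where t2: "t2 > 0"
      "polyP m n l (\<lambda>x y. X x y + t2 * - E x y)" "pot m n (\<lambda>x y. X x y + t2 * - E x y) < pot m n X"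
      by blast
    from less.hyps[OF t1(3) t1(2)] obtain lam1 where l1: "isdec m n (\<lambda>x y. X x y + t1 * E x y) lam1"
      "cnt_ok m n l lam1" by blast
    from less.hyps[OF t2(3) t2(2)] obtain lam2 where l2: "isdec m n (\<lambda>x y. X x y + t2 * - E x y) lam2"
      "cnt_ok m n l lam2" by blast
    define th where "th = t2 / (t1 + t2)"
    have th: "0 \<le> th" "th \<le> 1" using t1 t2 unfolding th_def by auto
    have "X x y = th * (X x y + t1 * E x y) + (1 - th) * (X x y + t2 * - E x y)" for x y
    proof -
      have "1 - th = t1 / (t1 + t2)" using t1 t2 unfolding th_def by (simp add: field_simps)
      hence a: "th * t1 - (1 - th) * t2 = 0" using t1 t2 unfolding th_def by (simp add: field_simps)
      have "th * (X x y + t1 * E x y) + (1 - th) * (X x y + t2 * - E x y) = X x y + (th * t1 - (1 - th) * t2) * E x y"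
        by (simp add: algebra_simps)
      thus ?thesis using a by simp
    qed
    hence "\<forall>x<m. \<forall>y<n. X x y = th * (X x y + t1 * E x y) + (1 - th) * (X x y + t2 * - E x y)" by blast
    from mix[OF l1 l2 th this] show ?thesis by blast
  qed
qed

lemma U_det: "j < n \<Longrightarrow> U_chan m j \<in> det_channels m n"
  unfolding U_chan_def det_channels_def PiE_def extensional_def by auto

lemma dm_U: "x < m \<Longrightarrow> det_matrix (U_chan m j) x y = (if j = y then 1 else 0)"
  unfolding det_matrix_def U_chan_def by auto

lemma U_inj: "0 < m \<Longrightarrow> U_chan m j = U_chan m j' \<Longrightarrow> j = j'"
  unfolding U_chan_def by (metis)

lemma drank_U: "0 < m \<Longrightarrow> drank m (U_chan m j) = 1"
proof -
  assume m: "0 < m"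
  have "U_chan m j ` {..<m} = {j}" using m unfolding U_chan_def by auto
  thus ?thesis unfolding drank_def by simp
qed

lemma drank_ge1: "0 < m \<Longrightarrow> drank m D \<ge> 1"
proof -
  assume "0 < m"
  hence "D 0 \<in> D ` {..<m}" by auto
  hence "card (D ` {..<m}) > 0" by (metis card_gt_0_iff empty_iff finite_imageI finite_lessThan)
  thus ?thesis unfolding drank_def by simp
qed

lemma drank_le_n: "D \<in> det_channels m n \<Longrightarrow> drank m D \<le> n"
proof -
  assume "D \<in> det_channels m n"
  hence "D ` {..<m} \<subseteq> {..<n}" unfolding det_channels_def by auto
  thus ?thesis unfolding drank_def by (metis card_lessThan card_mono finite_lessThan)
qed

lemma drank_le_m: "drank m D \<le> m"
  unfolding drank_def by (metis card_image_le card_lessThan finite_lessThan)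

lemma drank1_iff:
  assumes "0 < m" "D \<in> det_channels m n"
  shows "drank m D = 1 \<longleftrightarrow> (\<exists>j<n. D = U_chan m j)"
proof
  assume "drank m D = 1"
  then obtain j where j: "D ` {..<m} = {j}" unfolding drank_def by (auto simp: card_1_singleton_iff)
  have "D 0 = j" using j assms(1) by auto
  hence jn: "j < n" using assms unfolding det_channels_def by auto
  have "D = U_chan m j"
  proof
    fix x show "D x = U_chan m j x"
    proof (cases "x < m")
      case True thus ?thesis using j unfolding U_chan_def by auto
    next
      case False thus ?thesis using assms(2) unfolding U_chan_def det_channels_def PiE_def extensional_def by auto
    qed
  qed
  thus "\<exists>j<n. D = U_chan m j" using jn by blast
next
  assume "\<exists>j<n. D = U_chan m j"
  thus "drank m D = 1" using drank_U assms by auto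
qed

lemma Lambda_isdec: "lam \<in> Lambda m n W \<longleftrightarrow> isdec m n W lam"
  unfolding Lambda_def isdec_def by auto

lemma lam_le_entry:
  assumes "isdec m n W lam" "D \<in> det_channels m n" "x < m" "y < n" "D x = y"
  shows "lam D \<le> W x y"
proof -
  have "lam D * det_matrix D x y \<le> (\<Sum>D\<in>det_channels m n. lam D * det_matrix D x y)"
    using assms(1,2) finite_det unfolding isdec_def
    by (intro member_le_sum) (auto simp: det_matrix_def)
  thus ?thesis using assms unfolding isdec_def by (simp add: det_matrix_def)
qed

lemma P1_eq:
  assumes "0 < m" "isdec m n W lam"
  shows "P_lam m n lam 1 = (\<Sum>j<n. lam (U_chan m j))"
proof -
  have "{D\<in>det_channels m n. drank m D = 1} = U_chan m ` {..<n}"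
    using drank1_iff[OF assms(1)] U_det by blast
  moreover have "inj_on (U_chan m) {..<n}" using U_inj[OF assms(1)] by (auto simp: inj_on_def)
  ultimately show ?thesis unfolding P_lam_def by (simp add: sum.reindex)
qed

lemma C11_ge:
  assumes "0 < m" "isdec m n W lam"
  shows "C11 m n lam \<ge> 1 - P_lam m n lam 1"
proof -
  have "(\<Sum>D\<in>det_channels m n. lam D * (if drank m D = 1 then 0 else 1)) \<le> C11 m n lam"
    unfolding C11_def
  proof (rule sum_mono)
    fix D assume D: "D \<in> det_channels m n"
    have l: "lam D \<ge> 0" using assms D unfolding isdec_def by auto
    have "(if drank m D = 1 then 0 else 1) \<le> log 2 (real (drank m D))"
    proof (cases "drank m D = 1")
      case True thus ?thesis by simp
    next
      case False
      hence "drank m D \<ge> 2" using drank_ge1[OF assms(1), of D] by linarith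
      hence "log 2 2 \<le> log 2 (real (drank m D))" by (subst log_le_cancel_iff) auto
      thus ?thesis using False by simp
    qed
    from mult_left_mono[OF this l]
    show "lam D * (if drank m D = 1 then 0 else 1) \<le> lam D * log 2 (real (drank m D))" .
  qed
  moreover have "(\<Sum>D\<in>det_channels m n. lam D * (if drank m D = 1 then 0 else 1)) = 1 - P_lam m n lam 1"
  proof -
    have "(\<Sum>D\<in>det_channels m n. lam D * (if drank m D = 1 then 0 else 1)) =
       (\<Sum>D\<in>det_channels m n. lam D) - (\<Sum>D\<in>det_channels m n. if drank m D = 1 then lam D else 0)"
      by (subst sum_subtractf[symmetric]) (rule sum.cong, auto)
    also have "(\<Sum>D\<in>det_channels m n. if drank m D = 1 then lam D else 0) = P_lam m n lam 1"
      unfolding P_lam_def using finite_det by (simp add: sum.inter_filter)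
    finally show ?thesis using assms(2) unfolding isdec_def by simp
  qed
  ultimately show ?thesis by simp
qed

lemma C11_eq_le2:
  assumes "0 < m" "isdec m n W lam" "m = 2 \<or> n = 2"
  shows "C11 m n lam = 1 - P_lam m n lam 1"
proof -
  have "C11 m n lam = (\<Sum>D\<in>det_channels m n. lam D * (if drank m D = 1 then 0 else 1))"
    unfolding C11_def
  proof (rule sum.cong)
    fix D assume D: "D \<in> det_channels m n"
    have "drank m D \<le> 2" using drank_le_n[OF D] drank_le_m[of m D] assms(3) by auto
    hence "drank m D = 1 \<or> drank m D = 2" using drank_ge1[OF assms(1), of D] by linarith
    thus "lam D * log 2 (real (drank m D)) = lam D * (if drank m D = 1 then 0 else 1)" by auto
  qed simp
  also have "\<dots> = 1 - P_lam m n lam 1"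
  proof -
    have "(\<Sum>D\<in>det_channels m n. lam D * (if drank m D = 1 then 0 else 1)) =
       (\<Sum>D\<in>det_channels m n. lam D) - (\<Sum>D\<in>det_channels m n. if drank m D = 1 then lam D else 0)"
      by (subst sum_subtractf[symmetric]) (rule sum.cong, auto)
    also have "(\<Sum>D\<in>det_channels m n. if drank m D = 1 then lam D else 0) = P_lam m n lam 1"
      unfolding P_lam_def using finite_det by (simp add: sum.inter_filter)
    finally show ?thesis using assms(2) unfolding isdec_def by simp
  qed
  finally show ?thesis .
qed

lemma rank_bound:
  fixes a :: "nat \<Rightarrow> int"
  assumes D: "D \<in> det_channels m n" and a0: "\<forall>j<n. a j \<ge> 0"
    and c: "\<forall>j<n. real_of_int (a j) \<le> real (card {x\<in>{..<m}. D x = j})"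
  shows "int (drank m D) \<le> int m + int (card {j\<in>{..<n}. a j \<noteq> 0}) - (\<Sum>j<n. a j)"
proof -
  define A where "A = {j\<in>{..<n}. a j \<noteq> 0}"
  define Img where "Img = D ` {..<m}"
  define cnt where "cnt = (\<lambda>j. card {x\<in>{..<m}. D x = j})"
  have Imgn: "Img \<subseteq> {..<n}" using D unfolding Img_def det_channels_def by auto
  have fI: "finite Img" "finite A" unfolding Img_def A_def by auto
  have AI: "A \<subseteq> Img"
  proof
    fix j assume j: "j \<in> A"
    have jn: "j < n" "a j \<noteq> 0" using j unfolding A_def by auto
    hence "a j \<ge> 1" using a0 by force
    hence r1: "real_of_int (a j) \<ge> 1" by simp
    have "real_of_int (a j) \<le> real (cnt j)" using c jn unfolding cnt_def by blast
    hence "cnt j \<ge> 1" using r1 by linarith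
    hence "{x\<in>{..<m}. D x = j} \<noteq> {}" unfolding cnt_def by (metis card.empty not_one_le_zero)
    thus "j \<in> Img" unfolding Img_def by auto
  qed
  have msum: "m = (\<Sum>j\<in>Img. cnt j)"
  proof -
    have "(\<Sum>j\<in>Img. card {x\<in>{..<m}. D x = j}) = (\<Sum>j\<in>Img. \<Sum>x\<in>{x\<in>{..<m}. D x = j}. (1::nat))"
      by simp
    also have "\<dots> = (\<Sum>x\<in>{..<m}. (1::nat))"
      by (rule sum.group) (auto simp: Img_def)
    finally show ?thesis unfolding cnt_def by simp
  qed
  have "(\<Sum>j\<in>Img. cnt j) = (\<Sum>j\<in>Img - A. cnt j) + (\<Sum>j\<in>A. cnt j)"
    by (rule sum.subset_diff[OF AI fI(1)])
  hence "m = (\<Sum>j\<in>Img - A. cnt j) + (\<Sum>j\<in>A. cnt j)" using msum by simp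
  hence "int m = (\<Sum>j\<in>A. int (cnt j)) + (\<Sum>j\<in>Img - A. int (cnt j))"
    by simp
  moreover have "(\<Sum>j\<in>A. int (cnt j)) \<ge> (\<Sum>j\<in>A. a j)"
  proof (intro sum_mono)
    fix j assume "j \<in> A"
    hence "real_of_int (a j) \<le> real (cnt j)" using c unfolding A_def cnt_def by auto
    thus "a j \<le> int (cnt j)" by linarith
  qed
  moreover have "(\<Sum>j\<in>Img - A. int (cnt j)) \<ge> (\<Sum>j\<in>Img - A. 1)"
  proof (intro sum_mono)
    fix j assume "j \<in> Img - A"
    then obtain x where x: "x < m" "D x = j" unfolding Img_def by auto
    have "card {x\<in>{..<m}. D x = j} > 0"
      by (rule card_gt_0_iff[THEN iffD2]) (use x in auto)
    hence "cnt j \<ge> 1" unfolding cnt_def by simp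
    thus "1 \<le> int (cnt j)" by simp
  qed
  moreover have "(\<Sum>j\<in>Img - A. (1::int)) = int (card Img) - int (card A)"
    using fI AI by (simp add: card_Diff_subset of_nat_diff card_mono)
  moreover have "(\<Sum>j<n. a j) = (\<Sum>j\<in>A. a j)"
    unfolding A_def by (rule sum.mono_neutral_right) auto
  ultimately show ?thesis unfolding drank_def A_def[symmetric] Img_def[symmetric] by linarith
qed

lemma sumU_gen:
  fixes c :: "nat \<Rightarrow> real" and f :: "(nat \<Rightarrow> nat) \<Rightarrow> real"
  assumes "\<forall>j<n. U j \<in> S" "finite S"
  shows "(\<Sum>D\<in>S. (\<Sum>j<n. c j * (if D = U j then 1 else 0)) * f D) = (\<Sum>j<n. c j * f (U j))"
proof -
  have "(\<Sum>D\<in>S. (\<Sum>j<n. c j * (if D = U j then 1 else 0)) * f D) =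
        (\<Sum>D\<in>S. \<Sum>j<n. (if D = U j then c j * f D else 0))"
    by (rule sum.cong) (auto simp: sum_distrib_right intro!: sum.cong)
  also have "\<dots> = (\<Sum>j<n. \<Sum>D\<in>S. (if D = U j then c j * f D else 0))"
    by (rule sum.swap)
  also have "\<dots> = (\<Sum>j<n. c j * f (U j))"
    using assms by (intro sum.cong) (auto simp: sum.delta')
  finally show ?thesis .
qed

theorem theorem1:
  fixes m n :: nat and W :: "nat \<Rightarrow> nat \<Rightarrow> real"
  assumes "m \<ge> 2" and "n \<ge> 2" and "channel m n W"
  defines "\<alpha> \<equiv> (\<lambda>j. Min ((\<lambda>i. W i j) ` {..<m}))"
  defines "P1 \<equiv> upper_P m n W 1"
  defines "W' \<equiv> (\<lambda>x y. (W x y - (\<Sum>j<n. \<alpha> j * det_matrix (U_chan m j) x y)) / (1 - P1))"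
  defines "a \<equiv> (\<lambda>j. \<lfloor>\<Sum>x<m. W' x j\<rfloor>)"
  defines "\<gamma> \<equiv> min (int m + int (card {j\<in>{..<n}. a j \<noteq> 0}) - (\<Sum>j<n. a j)) (int n)"
  shows "P1 = (\<Sum>j<n. \<alpha> j)
    \<and> lower_C11 m n W \<ge> 1 - P1
    \<and> (P1 = 1 \<longrightarrow> lower_C11 m n W \<le> 0)
    \<and> (P1 < 1 \<longrightarrow> lower_C11 m n W \<le> (1 - P1) * log 2 (real_of_int \<gamma>))
    \<and> ((m = 2 \<or> n = 2) \<longrightarrow> lower_C11 m n W = 1 - P1)"
proof -
  have m0: "0 < m" using assms(1) by simp
  have W0: "\<forall>x<m. \<forall>y<n. W x y \<ge> 0" and Wr: "\<forall>x<m. (\<Sum>y<n. W x y) = 1"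
    using assms(3) unfolding channel_def by auto
  have al_le: "\<alpha> j \<le> W x j" if "x < m" for x j
    unfolding \<alpha>_def using that by (intro Min_le) auto
  have al_att: "\<exists>i<m. W i j = \<alpha> j" for j
  proof -
    have "\<alpha> j \<in> (\<lambda>i. W i j) ` {..<m}" unfolding \<alpha>_def using m0 by (intro Min_in) auto
    thus ?thesis by auto
  qed
  have al_nn: "\<alpha> j \<ge> 0" if "j < n" for j
  proof -
    obtain i where "i < m" "W i j = \<alpha> j" using al_att[of j] by blast
    thus ?thesis using W0 that by metis
  qed
  define s where "s = (\<Sum>j<n. \<alpha> j)"
  have s_le: "s \<le> 1"
  proof -
    have "s \<le> (\<Sum>j<n. W 0 j)" unfolding s_def using al_le m0 by (intro sum_mono) auto
    thus ?thesis using Wr m0 by auto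
  qed
  have s_nn: "s \<ge> 0" unfolding s_def using al_nn by (intro sum_nonneg) auto
  have sumU: "(\<Sum>j<n. \<alpha> j * det_matrix (U_chan m j) x y) = \<alpha> y" if "x < m" "y < n" for x y
    using that by (simp add: dm_U if_distrib[of "\<lambda>z. _ * z"] sum.delta cong: if_cong)
  have G1: "P_lam m n lam 1 \<le> s" if "isdec m n W lam" for lam
  proof -
    have "lam (U_chan m j) \<le> \<alpha> j" if j: "j < n" for j
    proof -
      have "\<forall>w\<in>(\<lambda>i. W i j) ` {..<m}. lam (U_chan m j) \<le> w"
      proof
        fix w assume "w \<in> (\<lambda>i. W i j) ` {..<m}"
        then obtain i where i: "i < m" "w = W i j" by auto
        show "lam (U_chan m j) \<le> w"
          using lam_le_entry[OF \<open>isdec m n W lam\<close> U_det[OF j] i(1) j] i unfolding U_chan_def by simp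
      qed
      moreover have "(\<lambda>i. W i j) ` {..<m} \<noteq> {}" using m0 by auto
      ultimately show ?thesis unfolding \<alpha>_def by (simp add: Min_ge_iff)
    qed
    hence "(\<Sum>j<n. lam (U_chan m j)) \<le> s" unfolding s_def by (intro sum_mono) auto
    thus ?thesis using P1_eq[OF m0 that] by simp
  qed
  define X where "X = (\<lambda>x y. (W x y - \<alpha> y) / (1 - s))"
  define l where "l = (\<lambda>j. \<lfloor>\<Sum>x<m. X x j\<rfloor>)"
  have ex0: "\<exists>lam0. (s < 1 \<longrightarrow> isdec m n X lam0 \<and> cnt_ok m n l lam0) \<and> (\<not> s < 1 \<longrightarrow> lam0 = (\<lambda>_. 0))"
  proof (cases "s < 1")
    case True
    have "polyP m n l X" unfolding polyP_def
    proof (intro conjI allI impI)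
      fix x y assume "x < m" "y < n"
      thus "X x y \<ge> 0" unfolding X_def using al_le True by (intro divide_nonneg_pos) auto
    next
      fix x assume x: "x < m"
      have "(\<Sum>y<n. X x y) = (\<Sum>y<n. W x y - \<alpha> y) / (1 - s)"
        unfolding X_def by (simp add: sum_divide_distrib)
      also have "\<dots> = (1 - s) / (1 - s)" using Wr x unfolding s_def by (simp add: sum_subtractf)
      finally show "(\<Sum>y<n. X x y) = 1" using True by simp
    next
      fix j assume "j < n"
      show "real_of_int (l j) \<le> (\<Sum>x<m. X x j)" unfolding l_def by (rule of_int_floor_le)
    qed
    from decomp[OF this] show ?thesis using True by blast
  next
    case False thus ?thesis by blast
  qed
  then obtain lam0 where L0: "s < 1 \<longrightarrow> isdec m n X lam0 \<and> cnt_ok m n l lam0"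
    "\<not> s < 1 \<longrightarrow> lam0 = (\<lambda>_. 0)" by blast
  have l0_out: "lam0 D = 0" if "D \<notin> det_channels m n" for D
    using L0 that unfolding isdec_def by (cases "s < 1") auto
  have l0_nn: "lam0 D \<ge> 0" if "D \<in> det_channels m n" for D
    using L0 that unfolding isdec_def by (cases "s < 1") auto
  have l0_sum: "(1 - s) * (\<Sum>D\<in>det_channels m n. lam0 D) = 1 - s"
    using L0 s_le unfolding isdec_def by (cases "s < 1") auto
  have l0_U: "lam0 (U_chan m j) = 0" if j: "j < n" for j
  proof (cases "s < 1")
    case True
    obtain i where i: "i < m" "W i j = \<alpha> j" using al_att by blast
    have "lam0 (U_chan m j) \<le> X i j"
      using lam_le_entry[of m n X lam0 "U_chan m j" i j] L0(1) True U_det[OF j] i j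
      unfolding U_chan_def by simp
    also have "X i j = 0" unfolding X_def using i by simp
    finally show ?thesis using l0_nn[OF U_det[OF j]] by simp
  next
    case False thus ?thesis using L0 by simp
  qed
  define lamT where "lamT = (\<lambda>D. (\<Sum>j<n. \<alpha> j * (if D = U_chan m j then 1 else 0)) + (1 - s) * lam0 D)"
  have Udet: "\<forall>j<n. U_chan m j \<in> det_channels m n" using U_det by blast
  have lamT_sum: "(\<Sum>D\<in>det_channels m n. lamT D * f D) =
      (\<Sum>j<n. \<alpha> j * f (U_chan m j)) + (1 - s) * (\<Sum>D\<in>det_channels m n. lam0 D * f D)" for f
  proof -
    have "(\<Sum>D\<in>det_channels m n. lamT D * f D) =
        (\<Sum>D\<in>det_channels m n. (\<Sum>j<n. \<alpha> j * (if D = U_chan m j then 1 else 0)) * f D)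
        + (\<Sum>D\<in>det_channels m n. (1 - s) * (lam0 D * f D))"
      unfolding lamT_def sum.distrib[symmetric] by (rule sum.cong) (simp_all only: distrib_right mult.assoc)
    also have "\<dots> = (\<Sum>j<n. \<alpha> j * f (U_chan m j)) + (1 - s) * (\<Sum>D\<in>det_channels m n. lam0 D * f D)"
      using sumU_gen[OF Udet finite_det] by (simp add: sum_distrib_left)
    finally show ?thesis .
  qed
  have LT: "isdec m n W lamT"
    unfolding isdec_def
  proof (intro conjI allI impI ballI)
    fix D assume D: "D \<notin> det_channels m n"
    hence "D \<noteq> U_chan m j" if "j < n" for j using Udet that by auto
    thus "lamT D = 0" unfolding lamT_def using l0_out[OF D] by simp
  next
    fix D assume D: "D \<in> det_channels m n"
    show "lamT D \<ge> 0" unfolding lamT_def using al_nn l0_nn[OF D] s_le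
      by (intro add_nonneg_nonneg sum_nonneg mult_nonneg_nonneg) auto
  next
    show "(\<Sum>D\<in>det_channels m n. lamT D) = 1"
      using lamT_sum[of "\<lambda>_. 1"] l0_sum unfolding s_def by simp
  next
    fix x y assume xy: "x < m" "y < n"
    have "(\<Sum>D\<in>det_channels m n. lamT D * det_matrix D x y) =
        \<alpha> y + (1 - s) * (\<Sum>D\<in>det_channels m n. lam0 D * det_matrix D x y)"
      using lamT_sum[of "\<lambda>D. det_matrix D x y"] sumU[OF xy] by simp
    also have "\<dots> = W x y"
    proof (cases "s < 1")
      case True
      hence "isdec m n X lam0" using L0(1) by blast
      hence "X x y = (\<Sum>D\<in>det_channels m n. lam0 D * det_matrix D x y)"
        using xy unfolding isdec_def by blast
      hence "(\<Sum>D\<in>det_channels m n. lam0 D * det_matrix D x y) = X x y" by simp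
      thus ?thesis using True unfolding X_def by simp
    next
      case False
      hence s1: "s = 1" using s_le by simp
      have "(\<Sum>y<n. W x y - \<alpha> y) = (\<Sum>y<n. W x y) - s" unfolding s_def by (simp add: sum_subtractf)
      hence z: "(\<Sum>y<n. W x y - \<alpha> y) = 0" using Wr xy s1 by simp
      have nn: "\<forall>y\<in>{..<n}. W x y - \<alpha> y \<ge> 0" using al_le xy by auto
      have "W x y - \<alpha> y = 0"
        using sum_nonneg_eq_0_iff[of "{..<n}" "\<lambda>y. W x y - \<alpha> y"] z nn xy by simp
      thus ?thesis using s1 by simp
    qed
    finally show "W x y = (\<Sum>D\<in>det_channels m n. lamT D * det_matrix D x y)" by simp
  qed
  have PT: "P_lam m n lamT 1 = s"
  proof -
    have "lamT (U_chan m j) = \<alpha> j" if j: "j < n" for j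
    proof -
      have "(\<Sum>j'<n. \<alpha> j' * (if U_chan m j = U_chan m j' then 1 else 0)) = (\<Sum>j'<n. if j' = j then \<alpha> j' else 0)"
        using U_inj[OF m0] by (intro sum.cong) auto
      also have "\<dots> = \<alpha> j" using j by (simp add: sum.delta')
      finally show ?thesis unfolding lamT_def using l0_U[OF j] by simp
    qed
    thus ?thesis using P1_eq[OF m0 LT] unfolding s_def by simp
  qed
  have CT: "C11 m n lamT = (1 - s) * (\<Sum>D\<in>det_channels m n. lam0 D * log 2 (real (drank m D)))"
    unfolding C11_def using lamT_sum[of "\<lambda>D. log 2 (real (drank m D))"] drank_U[OF m0] by simp
  have LamW: "lam \<in> Lambda m n W \<longleftrightarrow> isdec m n W lam" for lam by (rule Lambda_isdec)
  have P1s: "P1 = s"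
    unfolding P1_def upper_P_def
  proof (rule cSup_eq_maximum)
    show "s \<in> (\<lambda>lam. P_lam m n lam 1) ` Lambda m n W" using PT LT LamW by force
    fix v assume "v \<in> (\<lambda>lam. P_lam m n lam 1) ` Lambda m n W"
    thus "v \<le> s" using G1 LamW by auto
  qed
  have lowb: "C11 m n lam \<ge> 1 - s" if "lam \<in> Lambda m n W" for lam
    using C11_ge[OF m0, of n W lam] G1[of lam] that LamW by force
  have ne: "C11 m n ` Lambda m n W \<noteq> {}" using LT LamW by blast
  have bdd: "bdd_below (C11 m n ` Lambda m n W)"
    using lowb by (intro bdd_belowI[of _ "1 - s"]) auto
  have Tin: "C11 m n lamT \<in> C11 m n ` Lambda m n W" using LT LamW by blast
  have upT: "lower_C11 m n W \<le> C11 m n lamT"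
    unfolding lower_C11_def using Tin bdd by (rule cInf_lower)
  have c2: "lower_C11 m n W \<ge> 1 - P1"
    unfolding lower_C11_def P1s using ne lowb by (intro cInf_greatest) auto
  have c3: "P1 = 1 \<longrightarrow> lower_C11 m n W \<le> 0"
  proof
    assume "P1 = 1"
    hence "s = 1" using P1s by simp
    thus "lower_C11 m n W \<le> 0" using upT CT by simp
  qed
  have c4: "P1 < 1 \<longrightarrow> lower_C11 m n W \<le> (1 - P1) * log 2 (real_of_int \<gamma>)"
  proof
    assume "P1 < 1"
    hence s1: "s < 1" using P1s by simp
    have L0': "isdec m n X lam0" "cnt_ok m n l lam0" using L0(1) s1 by auto
    have W'X: "W' x y = X x y" if "x < m" "y < n" for x y
      unfolding W'_def X_def using sumU[OF that] P1s by simp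
    have al: "a j = l j" if "j < n" for j
    proof -
      have "(\<Sum>x<m. W' x j) = (\<Sum>x<m. X x j)" by (rule sum.cong) (use W'X that in auto)
      thus ?thesis unfolding a_def l_def by simp
    qed
    have gam: "\<gamma> = min (int m + int (card {j\<in>{..<n}. l j \<noteq> 0}) - (\<Sum>j<n. l j)) (int n)"
    proof -
      have "{j\<in>{..<n}. a j \<noteq> 0} = {j\<in>{..<n}. l j \<noteq> 0}" using al by auto
      moreover have "(\<Sum>j<n. a j) = (\<Sum>j<n. l j)" using al by (intro sum.cong) auto
      ultimately show ?thesis unfolding \<gamma>_def by simp
    qed
    have Xnn: "X x y \<ge> 0" if "x < m" "y < n" for x y
      unfolding X_def using al_le that s1 by (intro divide_nonneg_pos) auto
    have lnn: "\<forall>j<n. l j \<ge> 0" unfolding l_def using Xnn by (auto intro!: sum_nonneg)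
    have rk: "real (drank m D) \<le> real_of_int \<gamma>" if D: "D \<in> det_channels m n" "lam0 D > 0" for D
    proof -
      have "\<forall>j<n. real_of_int (l j) \<le> real (card {x\<in>{..<m}. D x = j})"
        using L0'(2) D unfolding cnt_ok_def by blast
      from rank_bound[OF D(1) lnn this]
      have "int (drank m D) \<le> int m + int (card {j\<in>{..<n}. l j \<noteq> 0}) - (\<Sum>j<n. l j)" .
      moreover have "int (drank m D) \<le> int n" using drank_le_n[OF D(1)] by simp
      ultimately have "int (drank m D) \<le> \<gamma>" unfolding gam by simp
      thus ?thesis by (metis of_int_le_iff of_int_of_nat_eq)
    qed
    have "(\<Sum>D\<in>det_channels m n. lam0 D * log 2 (real (drank m D))) \<le>
          (\<Sum>D\<in>det_channels m n. lam0 D * log 2 (real_of_int \<gamma>))"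
    proof (rule sum_mono)
      fix D assume D: "D \<in> det_channels m n"
      show "lam0 D * log 2 (real (drank m D)) \<le> lam0 D * log 2 (real_of_int \<gamma>)"
      proof (cases "lam0 D > 0")
        case True
        have r1: "real (drank m D) \<ge> 1" using drank_ge1[OF m0, of D] by simp
        have "log 2 (real (drank m D)) \<le> log 2 (real_of_int \<gamma>)"
          using rk[OF D True] r1 by (subst log_le_cancel_iff) auto
        thus ?thesis using True by (intro mult_left_mono) auto
      next
        case False
        hence "lam0 D = 0" using l0_nn[OF D] by simp
        thus ?thesis by simp
      qed
    qed
    also have "\<dots> = log 2 (real_of_int \<gamma>)"
      using L0'(1) unfolding isdec_def by (simp add: sum_distrib_right[symmetric])
    finally have "C11 m n lamT \<le> (1 - s) * log 2 (real_of_int \<gamma>)"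
      unfolding CT using s1 by (intro mult_left_mono) auto
    thus "lower_C11 m n W \<le> (1 - P1) * log 2 (real_of_int \<gamma>)" using upT P1s by simp
  qed
  have c5: "(m = 2 \<or> n = 2) \<longrightarrow> lower_C11 m n W = 1 - P1"
  proof
    assume mn: "m = 2 \<or> n = 2"
    show "lower_C11 m n W = 1 - P1"
      unfolding lower_C11_def P1s
    proof (rule cInf_eq_minimum)
      show "1 - s \<in> C11 m n ` Lambda m n W"
        using C11_eq_le2[OF m0 LT mn] PT Tin by simp
      fix v assume "v \<in> C11 m n ` Lambda m n W"
      thus "1 - s \<le> v" using lowb by auto
    qed
  qed
  show ?thesis using P1s c2 c3 c4 c5 unfolding s_def by blast
qed

end
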